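(* Let $0\le p\le1$ and let $\hat\rho=|\psi\rangle\langle\psi|$ with $|\psi\rangle$ any of $|\Phi^\pm\rangle=\sqrt p|0,0\rangle\pm\sqrt{1-p}|1,1\rangle$ or $|\Psi^\pm\rangle=\sqrt p|0,1\rangle\pm\sqrt{1-p}|1,0\rangle$ (Fock states of modes $A,B$). Then $Q(\hat\rho)=\frac{4}{\pi}\sqrt{p(1-p)}$, which equals $\frac{4}{\pi}$ times the negativity $\sqrt{p(1-p)}$ of $\hat\rho$; moreover the sign-binned quadrature correlation at $\theta=\varphi=0$, $E^{0,0}=\int\!\!\int f_{0,0}(u,v)\,\mathrm{sgn}(uv)\,du\,dv$, satisfies $|E^{0,0}|=\frac{4}{\pi}\sqrt{p(1-p)}$.
   Context: $|n\rangle$ are photon-number (Fock) states of a mode with quadratures $\hat x=(\hat a+\hat a^\dagger)/\sqrt2$, $\hat p=i(\hat a^\dagger-\hat a)/\sqrt2$. For angles $\theta,\varphi$, $\hat x_A^\theta=\cos\theta\,\hat x_A+\sin\theta\,\hat p_A$, $\hat x_B^\varphi=\cos\varphi\,\hat x_B+\sin\varphi\,\hat p_B$, and $f_{\theta,\varphi}(u,v)$ is the joint density of their outcomes on $\hat\rho$. For $u,v\ge0$, $S=f(u,v)+f(-u,-v)+f(u,-v)+f(-u,v)$, $D=f(u,v)+f(-u,-v)-f(u,-v)-f(-u,v)$, $\mathcal B_{\theta,\varphi}=|D|/S$ (0 where $S=0$), and $Q(\hat\rho)=\sup_{\theta,\varphi}\int\!\!\int f_{\theta,\varphi}(u,v)\mathcal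 B_{\theta,\varphi}(|u|,|v|)\,du\,dv$. *)

theory Defs
  imports "HOL-Analysis.Analysis"
begin

fun hermite :: "nat \<Rightarrow> real \<Rightarrow> real" where
  "hermite 0 x = 1"
| "hermite (Suc 0) x = 2 * x"
| "hermite (Suc (Suc n)) x = 2 * x * hermite (Suc n) x - 2 * real (Suc n) * hermite n x"

text \<open>Position-space wavefunction of the Fock state |n>, for the quadrature x = (a + a^dag)/sqrt 2.\<close>
definition fock_wf :: "nat \<Rightarrow> real \<Rightarrow> real" where
  "fock_wf n x = hermite n x * exp (- (x^2) / 2) / sqrt (2 ^ n * fact n * sqrt pi)"

text \<open>A two-mode pure state given by finitely many Fock coefficients c m n = <m,n|psi>.
  Its amplitude in the eigenbasis of (x_A^theta, x_B^phi):
  <u|_theta <v|_phi |psi> = sum c m n e^{-i m theta} e^{-i n phi} psi_m(u) psi_n(v),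
  since x^theta = e^{i theta N} x e^{-i theta N}.\<close>
definition quad_amp :: "(nat \<Rightarrow> nat \<Rightarrow> complex) \<Rightarrow> real \<Rightarrow> real \<Rightarrow> real \<Rightarrow> real \<Rightarrow> complex" where
  "quad_amp c \<theta> \<phi> u v =
     (\<Sum>(m,n)\<in>{(m,n). c m n \<noteq> 0}.
        c m n * cis (- (real m * \<theta>)) * cis (- (real n * \<phi>))
        * complex_of_real (fock_wf m u * fock_wf n v))"

definition quad_density :: "(nat \<Rightarrow> nat \<Rightarrow> complex) \<Rightarrow> real \<Rightarrow> real \<Rightarrow> real \<Rightarrow> real \<Rightarrow> real" where
  "quad_density c \<theta> \<phi> u v = (cmod (quad_amp c \<theta> \<phi> u v))\<^sup>2"

definition binS :: "(real \<Rightarrow> real \<Rightarrow> real) \<Rightarrow> real \<Rightarrow> real \<Rightarrow> real" where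
  "binS f u v = f u v + f (-u) (-v) + f u (-v) + f (-u) v"

definition binD :: "(real \<Rightarrow> real \<Rightarrow> real) \<Rightarrow> real \<Rightarrow> real \<Rightarrow> real" where
  "binD f u v = f u v + f (-u) (-v) - f u (-v) - f (-u) v"

definition binB :: "(real \<Rightarrow> real \<Rightarrow> real) \<Rightarrow> real \<Rightarrow> real \<Rightarrow> real" where
  "binB f u v = (if binS f u v = 0 then 0 else \<bar>binD f u v\<bar> / binS f u v)"

definition Qcorr :: "(nat \<Rightarrow> nat \<Rightarrow> complex) \<Rightarrow> real" where
  "Qcorr c = (SUP tp \<in> (UNIV :: (real \<times> real) set).
      (LINT z | lborel.
         quad_density c (fst tp) (snd tp) (fst z) (snd z)
         * binB (quad_density c (fst tp) (snd tp)) \<bar>fst z\<bar> \<bar>snd z\<bar>))"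

definition E00 :: "(nat \<Rightarrow> nat \<Rightarrow> complex) \<Rightarrow> real" where
  "E00 c = (LINT z | lborel. quad_density c 0 0 (fst z) (snd z) * sgn (fst z * snd z))"

definition Phi_state :: "real \<Rightarrow> real \<Rightarrow> nat \<Rightarrow> nat \<Rightarrow> complex" where
  "Phi_state s p m n =
     (if (m, n) = (0, 0) then complex_of_real (sqrt p)
      else if (m, n) = (1, 1) then complex_of_real (s * sqrt (1 - p)) else 0)"

definition Psi_state :: "real \<Rightarrow> real \<Rightarrow> nat \<Rightarrow> nat \<Rightarrow> complex" where
  "Psi_state s p m n =
     (if (m, n) = (0, 1) then complex_of_real (sqrt p)
      else if (m, n) = (1, 0) then complex_of_real (s * sqrt (1 - p)) else 0)"

end

theory Submission imports Defs "HOL-Probability.Distributions"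
begin

lemma gauss_abs1: "has_bochner_integral lborel (\<lambda>x::real. exp (- x\<^sup>2) * \<bar>x\<bar>) 1"
proof -
  have "has_bochner_integral lborel (\<lambda>x::real. indicator {0..} x *\<^sub>R (exp (- x\<^sup>2) * \<bar>x\<bar>)) (1/2)"
    by (rule has_bochner_integral_cong[THEN iffD1, OF _ _ _ gaussian_moment_odd_pos[of 0]])
       (auto split: split_indicator)
  from has_bochner_integral_even_function[OF this] show ?thesis by simp
qed

lemma gauss_even: "integrable lborel (\<lambda>x::real. exp (- x\<^sup>2) * (1 + x\<^sup>2))"
proof -
  have "has_bochner_integral lborel (\<lambda>x::real. exp (- x\<^sup>2) * x ^ (2 * k)) (2 *\<^sub>R ((sqrt pi / 2) * (fact (2 * k) / (2 ^ (2 * k) * fact k))))" for k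
    by (rule has_bochner_integral_even_function[OF gaussian_moment_even_pos]) simp
  from this[of 0] this[of 1] have "integrable lborel (\<lambda>x::real. exp (- x\<^sup>2))"
     "integrable lborel (\<lambda>x::real. exp (- x\<^sup>2) * x\<^sup>2)"
    by (auto simp: has_bochner_integral_iff)
  then have "integrable lborel (\<lambda>x::real. exp (- x\<^sup>2) + exp (- x\<^sup>2) * x\<^sup>2)" by auto
  then show ?thesis by (simp add: algebra_simps)
qed

lemma pair_mult:
  fixes f g :: "real \<Rightarrow> real"
  assumes f: "has_bochner_integral lborel f a" and g: "has_bochner_integral lborel g b"
  shows "has_bochner_integral (lborel::(real\<times>real) measure) (\<lambda>z. f (fst z) * g (snd z)) (a*b)"
proof -
  interpret P: pair_sigma_finite lborel lborel ..
  have fi: "integrable lborel f" and gi: "integrable lborel g"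
    using f g by (auto simp: has_bochner_integral_iff)
  have [measurable]: "f \<in> borel_measurable borel" "g \<in> borel_measurable borel"
    using fi gi by auto
  have int: "integrable (lborel \<Otimes>\<^sub>M lborel) (\<lambda>z. f (fst z) * g (snd z))"
  proof (subst integrable_iff_bounded, intro conjI)
    show "(\<lambda>z. f (fst z) * g (snd z)) \<in> borel_measurable (lborel \<Otimes>\<^sub>M lborel)" by measurable
    have "(\<integral>\<^sup>+ z. ennreal (norm (f (fst z) * g (snd z))) \<partial>(lborel \<Otimes>\<^sub>M lborel))
       = (\<integral>\<^sup>+ x. \<integral>\<^sup>+ y. ennreal (norm (f x)) * ennreal (norm (g y)) \<partial>lborel \<partial>lborel)"
    proof -
      have "(\<integral>\<^sup>+ x. \<integral>\<^sup>+ y. (\<lambda>z. ennreal (norm (f (fst z) * g (snd z)))) (x,y) \<partial>lborel \<partial>lborel)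
         = (\<integral>\<^sup>+ z. ennreal (norm (f (fst z) * g (snd z))) \<partial>(lborel \<Otimes>\<^sub>M lborel))"
        by (rule sigma_finite_measure.nn_integral_fst[OF sigma_finite_lborel]) measurable
      then show ?thesis by (simp add: abs_mult ennreal_mult)
    qed
    also have "\<dots> = (\<integral>\<^sup>+ x. ennreal (norm (f x)) * (\<integral>\<^sup>+ y. ennreal (norm (g y)) \<partial>lborel) \<partial>lborel)"
      by (subst nn_integral_cmult) auto
    also have "\<dots> = (\<integral>\<^sup>+ x. ennreal (norm (f x)) \<partial>lborel) * (\<integral>\<^sup>+ y. ennreal (norm (g y)) \<partial>lborel)"
      by (subst nn_integral_multc) auto
    also have "\<dots> < \<infinity>"
      using fi gi by (auto simp: integrable_iff_bounded ennreal_mult_less_top)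
    finally show "(\<integral>\<^sup>+ z. ennreal (norm (f (fst z) * g (snd z))) \<partial>(lborel \<Otimes>\<^sub>M lborel)) < \<infinity>" .
  qed
  have "integral\<^sup>L (lborel \<Otimes>\<^sub>M lborel) (\<lambda>z. f (fst z) * g (snd z))
      = (\<integral>x. (\<integral>y. f x * g y \<partial>lborel) \<partial>lborel)"
    using lborel_pair.integral_fst'[OF int] by simp
  also have "\<dots> = a * b"
    using f g by (simp add: has_bochner_integral_integral_eq)
  finally show ?thesis using int
    by (simp add: lborel_prod has_bochner_integral_iff)
qed

lemma odd_zero:
  fixes h :: "real \<times> real \<Rightarrow> real"
  assumes hi: "integrable lborel h" and odd: "\<And>u v. h (-u, v) = - h (u, v)"
  shows "integral\<^sup>L lborel h = 0"
proof -
  interpret P: pair_sigma_finite lborel lborel ..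
  have hi': "integrable (lborel \<Otimes>\<^sub>M lborel) (case_prod (\<lambda>u v. h (u, v)))"
    using hi by (simp add: lborel_prod)
  have inner: "(\<integral>u. h (u, v) \<partial>lborel) = 0" for v
  proof -
    have "(\<integral>u. h (u, v) \<partial>lborel) = \<bar>-1\<bar> *\<^sub>R (\<integral>u. h (0 + (-1) * u, v) \<partial>lborel)"
      by (rule lborel_integral_real_affine[where f="\<lambda>u. h (u, v)"]) simp
    also have "\<dots> = - (\<integral>u. h (u, v) \<partial>lborel)" by (simp add: odd)
    finally show ?thesis by simp
  qed
  have "integral\<^sup>L lborel h = integral\<^sup>L (lborel \<Otimes>\<^sub>M lborel) (case_prod (\<lambda>u v. h (u, v)))"
    by (simp add: lborel_prod)
  also have "\<dots> = (\<integral>v. (\<integral>u. h (u, v) \<partial>lborel) \<partial>lborel)"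
    using lborel_pair.integral_snd[OF hi'] by simp
  also have "\<dots> = 0" by (simp add: inner)
  finally show ?thesis .
qed

definition PE :: "real \<Rightarrow> real \<Rightarrow> real \<Rightarrow> real \<Rightarrow> real \<Rightarrow> real \<Rightarrow> real" where
  "PE a b g d u v = a + b * u\<^sup>2 + g * v\<^sup>2 + d * (u\<^sup>2 * v\<^sup>2)"

lemma PE_sym[simp]: "PE a b g d (-u) v = PE a b g d u v" "PE a b g d u (-v) = PE a b g d u v"
  "PE a b g d \<bar>u\<bar> v = PE a b g d u v" "PE a b g d u \<bar>v\<bar> = PE a b g d u v"
  by (simp_all add: PE_def)

lemma PE_bound: "\<bar>PE a b g d u v\<bar> \<le> (\<bar>a\<bar> + \<bar>b\<bar> + \<bar>g\<bar> + \<bar>d\<bar>) * ((1 + u\<^sup>2) * (1 + v\<^sup>2))"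
proof -
  have "\<bar>PE a b g d u v\<bar> \<le> \<bar>a\<bar> + \<bar>b\<bar> * u\<^sup>2 + \<bar>g\<bar> * v\<^sup>2 + \<bar>d\<bar> * (u\<^sup>2 * v\<^sup>2)"
    unfolding PE_def by (rule order_trans[OF abs_triangle_ineq] add_mono)+ (simp_all add: abs_mult)
  also have "\<dots> \<le> (\<bar>a\<bar> + \<bar>b\<bar> + \<bar>g\<bar> + \<bar>d\<bar>) * ((1 + u\<^sup>2) * (1 + v\<^sup>2))"
    by (simp add: algebra_simps mult_nonneg_nonneg add_nonneg_nonneg)
  finally show ?thesis .
qed

lemma abs_le_sq: "\<bar>x::real\<bar> \<le> 1 + x\<^sup>2"
proof -
  have "0 \<le> (\<bar>x\<bar> - 1)\<^sup>2" by simp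
  also have "(\<bar>x\<bar> - 1)\<^sup>2 = x\<^sup>2 - 2 * \<bar>x\<bar> + 1" by (simp add: power2_diff)
  finally show ?thesis by simp
qed

lemma dom_int: "integrable (lborel::(real\<times>real) measure)
   (\<lambda>z. (exp (- (fst z)\<^sup>2) * (1 + (fst z)\<^sup>2)) * (exp (- (snd z)\<^sup>2) * (1 + (snd z)\<^sup>2)))"
  using pair_mult[OF has_bochner_integral_integrable[OF gauss_even] has_bochner_integral_integrable[OF gauss_even]]
  by (simp add: has_bochner_integral_iff)

lemma main_int: "has_bochner_integral (lborel::(real\<times>real) measure)
   (\<lambda>z. (exp (- (fst z)\<^sup>2) * \<bar>fst z\<bar>) * (exp (- (snd z)\<^sup>2) * \<bar>snd z\<bar>)) 1"
  using pair_mult[OF gauss_abs1 gauss_abs1] by simp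

lemma core:
  fixes a b g d c :: real and f :: "real \<Rightarrow> real \<Rightarrow> real"
  assumes f: "\<And>u v. f u v = exp (- u\<^sup>2) * exp (- v\<^sup>2) / pi * (PE a b g d u v + c * u * v)"
    and nn: "\<And>u v. 0 \<le> PE a b g d u v + c * u * v"
  shows "(LINT z|lborel. f (fst z) (snd z) * binB f \<bar>fst z\<bar> \<bar>snd z\<bar>) = \<bar>c\<bar> / pi"
    and "(LINT z|lborel. f (fst z) (snd z) * sgn (fst z * snd z)) = c / pi"
proof -
  let ?E = "PE a b g d"
  let ?G = "\<lambda>u v. exp (- u\<^sup>2) * exp (- v\<^sup>2) / pi"
  have cuv: "\<bar>c * u * v\<bar> \<le> ?E u v" for u v
    using nn[of u v] nn[of "-u" v] by simp
  have Gpos: "?G u v > 0" for u v by simp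
  define M where "M = \<bar>a\<bar> + \<bar>b\<bar> + \<bar>g\<bar> + \<bar>d\<bar>"
  define D where "D = (\<lambda>z::real\<times>real. (exp (- (fst z)\<^sup>2) * (1 + (fst z)\<^sup>2)) * (exp (- (snd z)\<^sup>2) * (1 + (snd z)\<^sup>2)))"
  have Dint: "integrable lborel D" unfolding D_def by (rule dom_int)
  define m where "m = (\<lambda>z::real\<times>real. \<bar>c\<bar> / pi * ((exp (- (fst z)\<^sup>2) * \<bar>fst z\<bar>) * (exp (- (snd z)\<^sup>2) * \<bar>snd z\<bar>)))"
  have mint: "has_bochner_integral lborel m (\<bar>c\<bar> / pi)"
    unfolding m_def using has_bochner_integral_mult_right[OF main_int, of "\<bar>c\<bar> / pi"] by simp
  define m2 where "m2 = (\<lambda>z::real\<times>real. c / pi * ((exp (- (fst z)\<^sup>2) * \<bar>fst z\<bar>) * (exp (- (snd z)\<^sup>2) * \<bar>snd z\<bar>)))"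
  have m2int: "has_bochner_integral lborel m2 (c / pi)"
    unfolding m2_def using has_bochner_integral_mult_right[OF main_int, of "c / pi"] by simp
  define o1 where "o1 = (\<lambda>z::real\<times>real. if ?E (fst z) (snd z) = 0 then 0 else
      ?G (fst z) (snd z) * (c * fst z * snd z) * \<bar>c\<bar> * \<bar>fst z\<bar> * \<bar>snd z\<bar> / ?E (fst z) (snd z))"
  define o2 where "o2 = (\<lambda>z::real\<times>real. ?G (fst z) (snd z) * ?E (fst z) (snd z) * sgn (fst z * snd z))"
  have "o1 \<in> borel_measurable (lborel \<Otimes>\<^sub>M lborel)" unfolding o1_def PE_def by measurable
  then have o1m: "o1 \<in> borel_measurable lborel" by (simp add: lborel_prod)
  have "o2 \<in> borel_measurable (lborel \<Otimes>\<^sub>M lborel)" unfolding o2_def PE_def by measurable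
  then have o2m: "o2 \<in> borel_measurable lborel" by (simp add: lborel_prod)
  have o1b: "norm (o1 z) \<le> norm (\<bar>c\<bar> / pi * D z)" for z
  proof (cases "?E (fst z) (snd z) = 0")
    case False
    let ?u = "fst z" and ?v = "snd z"
    have Epos: "?E ?u ?v > 0" using False cuv[of ?u ?v] by linarith
    have "\<bar>o1 z\<bar> = ?G ?u ?v * \<bar>c\<bar> * \<bar>?u\<bar> * \<bar>?v\<bar> * (\<bar>c * ?u * ?v\<bar> / ?E ?u ?v)"
      using False Epos Gpos[of ?u ?v] by (simp add: o1_def abs_mult)
    also have "\<dots> \<le> ?G ?u ?v * \<bar>c\<bar> * \<bar>?u\<bar> * \<bar>?v\<bar> * 1"
      using cuv[of ?u ?v] Epos Gpos[of ?u ?v] by (intro mult_left_mono) (auto simp: divide_le_eq)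
    also have "\<dots> \<le> \<bar>c\<bar> / pi * D z"
    proof -
      have "\<bar>?u\<bar> * \<bar>?v\<bar> \<le> (1 + ?u\<^sup>2) * (1 + ?v\<^sup>2)"
        by (intro mult_mono abs_le_sq) auto
      then have "exp (- ?u\<^sup>2) * exp (- ?v\<^sup>2) * (\<bar>?u\<bar> * \<bar>?v\<bar>) \<le> exp (- ?u\<^sup>2) * exp (- ?v\<^sup>2) * ((1 + ?u\<^sup>2) * (1 + ?v\<^sup>2))"
        by (intro mult_left_mono) auto
      then have "\<bar>c\<bar> / pi * (exp (- ?u\<^sup>2) * exp (- ?v\<^sup>2) * (\<bar>?u\<bar> * \<bar>?v\<bar>)) \<le> \<bar>c\<bar> / pi * (exp (- ?u\<^sup>2) * exp (- ?v\<^sup>2) * ((1 + ?u\<^sup>2) * (1 + ?v\<^sup>2)))"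
        by (intro mult_left_mono) auto
      then show ?thesis by (simp add: D_def mult_ac)
    qed
    finally show ?thesis using Gpos by (simp add: D_def)
  qed (simp add: o1_def D_def)
  have o2b: "norm (o2 z) \<le> norm (M / pi * D z)" for z
  proof -
    let ?u = "fst z" and ?v = "snd z"
    have "\<bar>o2 z\<bar> \<le> ?G ?u ?v * \<bar>?E ?u ?v\<bar>"
      by (simp add: o2_def abs_mult sgn_mult abs_sgn_eq)
    also have "\<dots> \<le> ?G ?u ?v * (M * ((1 + ?u\<^sup>2) * (1 + ?v\<^sup>2)))"
      using PE_bound[of a b g d ?u ?v] unfolding M_def by (intro mult_left_mono) auto
    also have "\<dots> = M / pi * D z" by (simp add: D_def mult_ac)
    also have "\<dots> \<le> norm (M / pi * D z)" by (simp add: divide_right_mono)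
    finally show ?thesis by simp
  qed
  have o1i: "integrable lborel o1"
    by (rule Bochner_Integration.integrable_bound[OF integrable_mult_right[OF Dint, of "\<bar>c\<bar> / pi"] o1m]) (use o1b in \<open>auto simp del: norm_mult real_norm_def\<close>)
  have o2i: "integrable lborel o2"
    by (rule Bochner_Integration.integrable_bound[OF integrable_mult_right[OF Dint, of "M / pi"] o2m]) (use o2b in \<open>auto simp del: norm_mult real_norm_def\<close>)
  have o1z: "integral\<^sup>L lborel o1 = 0"
    by (rule odd_zero[OF o1i]) (simp add: o1_def)
  have o2z: "integral\<^sup>L lborel o2 = 0"
    by (rule odd_zero[OF o2i]) (simp add: o2_def)
  have bS: "binS f \<bar>u\<bar> \<bar>v\<bar> = 4 * ?G u v * ?E u v" for u v
    unfolding binS_def f by (simp add: field_simps)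
  have bD: "binD f \<bar>u\<bar> \<bar>v\<bar> = 4 * ?G u v * (c * \<bar>u\<bar> * \<bar>v\<bar>)" for u v
    unfolding binD_def f by (simp add: field_simps)
  have eq1: "f (fst z) (snd z) * binB f \<bar>fst z\<bar> \<bar>snd z\<bar> = m z + o1 z" for z
  proof (cases "?E (fst z) (snd z) = 0")
    case True
    then have "c * fst z * snd z = 0" using cuv[of "fst z" "snd z"] by simp
    then have "\<bar>c\<bar> * \<bar>fst z\<bar> * \<bar>snd z\<bar> = 0" by (simp add: abs_mult[symmetric])
    then show ?thesis using True by (simp add: binB_def bS m_def o1_def mult_ac)
  next
    case False
    let ?u = "fst z" and ?v = "snd z"
    have Epos: "?E ?u ?v > 0" using False cuv[of ?u ?v] by linarith
    have "binB f \<bar>?u\<bar> \<bar>?v\<bar> = \<bar>c\<bar> * \<bar>?u\<bar> * \<bar>?v\<bar> / ?E ?u ?v"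
      using Epos Gpos[of ?u ?v] by (simp add: binB_def bS bD abs_mult)
    then show ?thesis using Epos unfolding f m_def o1_def
      by (simp add: field_simps)
  qed
  have eq2: "f (fst z) (snd z) * sgn (fst z * snd z) = m2 z + o2 z" for z
    unfolding f m2_def o2_def
    by (simp add: algebra_simps sgn_mult abs_mult) (auto simp: sgn_real_def field_simps)
  show "(LINT z|lborel. f (fst z) (snd z) * binB f \<bar>fst z\<bar> \<bar>snd z\<bar>) = \<bar>c\<bar> / pi"
    unfolding eq1 using mint o1i o1z by (simp add: has_bochner_integral_iff)
  show "(LINT z|lborel. f (fst z) (snd z) * sgn (fst z * snd z)) = c / pi"
    unfolding eq2 using m2int o2i o2z by (simp add: has_bochner_integral_iff)
qed

lemma final:
  fixes c :: "nat \<Rightarrow> nat \<Rightarrow> complex" and w :: "real \<Rightarrow> real \<Rightarrow> real" and K :: real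
  assumes dens: "\<And>\<theta> \<phi>. quad_density c \<theta> \<phi> = (\<lambda>u v. exp (- u\<^sup>2) * exp (- v\<^sup>2) / pi
       * (PE a b g d u v + (K * cos (w \<theta> \<phi>)) * u * v))"
    and w0: "w 0 0 = 0"
  shows "Qcorr c = \<bar>K\<bar> / pi \<and> \<bar>E00 c\<bar> = \<bar>K\<bar> / pi"
proof -
  have nn: "0 \<le> PE a b g d u v + (K * cos (w \<theta> \<phi>)) * u * v" for \<theta> \<phi> u v
  proof -
    have "0 \<le> quad_density c \<theta> \<phi> u v" by (simp add: quad_density_def)
    then have "0 \<le> exp (- u\<^sup>2) * exp (- v\<^sup>2) / pi * (PE a b g d u v + (K * cos (w \<theta> \<phi>)) * u * v)"
      by (simp add: dens)
    moreover have "exp (- u\<^sup>2) * exp (- v\<^sup>2) / pi > 0" by simp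
    ultimately show ?thesis using zero_le_mult_iff by (metis linorder_not_le)
  qed
  have I: "(LINT z|lborel. quad_density c \<theta> \<phi> (fst z) (snd z) * binB (quad_density c \<theta> \<phi>) \<bar>fst z\<bar> \<bar>snd z\<bar>)
      = \<bar>K * cos (w \<theta> \<phi>)\<bar> / pi" for \<theta> \<phi>
    by (rule core(1)[of _ a b g d "K * cos (w \<theta> \<phi>)"]) (auto simp: dens nn)
  have "E00 c = K * cos (w 0 0) / pi"
    unfolding E00_def by (rule core(2)[of _ a b g d]) (auto simp: dens nn)
  then have E: "E00 c = K / pi" by (simp add: w0)
  have Q: "Qcorr c = Sup ((\<lambda>tp. \<bar>K * cos (w (fst tp) (snd tp))\<bar> / pi) ` UNIV)"
    unfolding Qcorr_def I ..
  also have "\<dots> = \<bar>K\<bar> / pi"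
  proof (rule cSup_eq_maximum)
    show "\<bar>K\<bar> / pi \<in> range (\<lambda>tp. \<bar>K * cos (w (fst tp) (snd tp))\<bar> / pi)"
      by (rule image_eqI[of _ _ "(0,0)"]) (auto simp: w0)
    fix x assume "x \<in> range (\<lambda>tp. \<bar>K * cos (w (fst tp) (snd tp))\<bar> / pi)"
    then obtain tp where x: "x = \<bar>K * cos (w (fst tp) (snd tp))\<bar> / pi" by auto
    have "\<bar>K * cos (w (fst tp) (snd tp))\<bar> \<le> \<bar>K\<bar>"
      by (simp add: abs_mult mult_left_le)
    then show "x \<le> \<bar>K\<bar> / pi" unfolding x by (simp add: divide_right_mono)
  qed
  finally show ?thesis using E by simp
qed

lemma fock0: "fock_wf 0 x = exp (- x\<^sup>2 / 2) / sqrt (sqrt pi)"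
  by (simp add: fock_wf_def)

lemma fock1: "fock_wf 1 x = sqrt 2 * x * exp (- x\<^sup>2 / 2) / sqrt (sqrt pi)"
proof -
  have "fock_wf 1 x = 2 * x * exp (- x\<^sup>2 / 2) / (sqrt 2 * sqrt (sqrt pi))"
    by (simp add: fock_wf_def real_sqrt_mult)
  also have "\<dots> = (sqrt 2 * sqrt 2) * x * exp (- x\<^sup>2 / 2) / (sqrt 2 * sqrt (sqrt pi))"
    by simp
  also have "\<dots> = sqrt 2 * x * exp (- x\<^sup>2 / 2) / sqrt (sqrt pi)"
    by (simp only: mult.assoc mult_divide_mult_cancel_left_if) simp
  finally show ?thesis .
qed

lemma cmod_cis2: "(cmod (complex_of_real A * cis s + complex_of_real B * cis t))\<^sup>2
    = A\<^sup>2 + B\<^sup>2 + 2 * A * B * cos (s - t)"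
proof -
  have "(cmod (complex_of_real A * cis s + complex_of_real B * cis t))\<^sup>2
      = (A * cos s + B * cos t)\<^sup>2 + (A * sin s + B * sin t)\<^sup>2"
    by (simp add: cmod_power2 cis.sel)
  also have "\<dots> = A\<^sup>2 + B\<^sup>2 + 2 * A * B * cos (s - t)"
    using sin_cos_squared_add[of s] sin_cos_squared_add[of t] unfolding cos_diff by algebra
  finally show ?thesis .
qed

lemma exp_half_sq: "(exp (- (x::real)\<^sup>2 / 2))\<^sup>2 = exp (- x\<^sup>2)"
  by (simp add: power2_eq_square exp_add[symmetric])

lemma sqsqpi: "(sqrt (sqrt pi))\<^sup>2 = sqrt pi" "(sqrt pi)\<^sup>2 = pi"
  by simp_all

lemma Phi_amp:
  "quad_amp (Phi_state s p) \<theta> \<phi> u v =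
     complex_of_real (sqrt p * (fock_wf 0 u * fock_wf 0 v)) * cis 0
   + complex_of_real (s * sqrt (1 - p) * (fock_wf 1 u * fock_wf 1 v)) * cis (- \<theta> - \<phi>)"
proof -
  let ?g = "\<lambda>(m, n). Phi_state s p m n * cis (- (real m * \<theta>)) * cis (- (real n * \<phi>))
        * complex_of_real (fock_wf m u * fock_wf n v)"
  have "quad_amp (Phi_state s p) \<theta> \<phi> u v = sum ?g {(m,n). Phi_state s p m n \<noteq> 0}"
    unfolding quad_amp_def ..
  also have "\<dots> = sum ?g {(0,0),(1,1)}"
    by (rule sum.mono_neutral_left) (auto simp: Phi_state_def split: if_splits)
  also have "\<dots> = complex_of_real (sqrt p * (fock_wf 0 u * fock_wf 0 v)) * cis 0
   + complex_of_real (s * sqrt (1 - p) * (fock_wf 1 u * fock_wf 1 v)) * cis (- \<theta> - \<phi>)"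
  proof -
    have e: "cis (- \<phi> - \<theta>) = cis (- \<theta> - \<phi>)" by (rule arg_cong[where f=cis]) simp
    show ?thesis by (simp add: Phi_state_def cis_mult mult_ac e)
  qed
  finally show ?thesis .
qed

lemma Psi_amp:
  "quad_amp (Psi_state s p) \<theta> \<phi> u v =
     complex_of_real (sqrt p * (fock_wf 0 u * fock_wf 1 v)) * cis (- \<phi>)
   + complex_of_real (s * sqrt (1 - p) * (fock_wf 1 u * fock_wf 0 v)) * cis (- \<theta>)"
proof -
  let ?g = "\<lambda>(m, n). Psi_state s p m n * cis (- (real m * \<theta>)) * cis (- (real n * \<phi>))
        * complex_of_real (fock_wf m u * fock_wf n v)"
  have "quad_amp (Psi_state s p) \<theta> \<phi> u v = sum ?g {(m,n). Psi_state s p m n \<noteq> 0}"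
    unfolding quad_amp_def ..
  also have "\<dots> = sum ?g {(0,1),(1,0)}"
    by (rule sum.mono_neutral_left) (auto simp: Psi_state_def split: if_splits)
  also have "\<dots> = complex_of_real (sqrt p * (fock_wf 0 u * fock_wf 1 v)) * cis (- \<phi>)
   + complex_of_real (s * sqrt (1 - p) * (fock_wf 1 u * fock_wf 0 v)) * cis (- \<theta>)"
    by (simp add: Psi_state_def mult_ac)
  finally show ?thesis .
qed

lemma fock_prods:
  "fock_wf 0 u * fock_wf 0 v = exp (- u\<^sup>2 / 2) * exp (- v\<^sup>2 / 2) / sqrt pi"
  "fock_wf 1 u * fock_wf 1 v = 2 * u * v * (exp (- u\<^sup>2 / 2) * exp (- v\<^sup>2 / 2) / sqrt pi)"
  "fock_wf 0 u * fock_wf 1 v = sqrt 2 * v * (exp (- u\<^sup>2 / 2) * exp (- v\<^sup>2 / 2) / sqrt pi)"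
  "fock_wf 1 u * fock_wf 0 v = sqrt 2 * u * (exp (- u\<^sup>2 / 2) * exp (- v\<^sup>2 / 2) / sqrt pi)"
proof -
  define r where "r = sqrt (sqrt pi)"
  have r: "r * r = sqrt pi" unfolding r_def by simp
  have s2: "sqrt 2 * sqrt 2 = (2::real)" by simp
  define eu where "eu = exp (- u\<^sup>2 / 2)"
  define ev where "ev = exp (- v\<^sup>2 / 2)"
  have f0: "fock_wf 0 x = exp (- x\<^sup>2 / 2) / r" for x unfolding fock0 r_def ..
  have f1: "fock_wf 1 x = sqrt 2 * x * exp (- x\<^sup>2 / 2) / r" for x unfolding fock1 r_def ..
  have a: "A / r * (B / r) = A * B / sqrt pi" for A B by (simp add: r[symmetric])
  show "fock_wf 0 u * fock_wf 0 v = exp (- u\<^sup>2 / 2) * exp (- v\<^sup>2 / 2) / sqrt pi"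
    unfolding f0 a ..
  show "fock_wf 1 u * fock_wf 1 v = 2 * u * v * (exp (- u\<^sup>2 / 2) * exp (- v\<^sup>2 / 2) / sqrt pi)"
    unfolding f1 a by (simp add: mult_ac)
  show "fock_wf 0 u * fock_wf 1 v = sqrt 2 * v * (exp (- u\<^sup>2 / 2) * exp (- v\<^sup>2 / 2) / sqrt pi)"
    unfolding f0 f1 a by (simp add: mult_ac)
  show "fock_wf 1 u * fock_wf 0 v = sqrt 2 * u * (exp (- u\<^sup>2 / 2) * exp (- v\<^sup>2 / 2) / sqrt pi)"
    unfolding f0 f1 a by (simp add: mult_ac)
qed

lemma W_sq: "(exp (- u\<^sup>2 / 2) * exp (- v\<^sup>2 / 2) / sqrt pi)\<^sup>2 = exp (- u\<^sup>2) * exp (- v\<^sup>2) / pi"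
  unfolding power_mult_distrib power_divide exp_half_sq by simp

lemma Phi_dens:
  assumes s: "s\<^sup>2 = 1" and p: "0 \<le> p" "p \<le> 1"
  shows "quad_density (Phi_state s p) \<theta> \<phi> = (\<lambda>u v. exp (- u\<^sup>2) * exp (- v\<^sup>2) / pi
       * (PE p 0 0 (4 * (1 - p)) u v + (4 * s * sqrt p * sqrt (1 - p) * cos (\<theta> + \<phi>)) * u * v))"
proof (intro ext)
  fix u v
  define W where "W = exp (- u\<^sup>2 / 2) * exp (- v\<^sup>2 / 2) / sqrt pi"
  have W2: "W\<^sup>2 = exp (- u\<^sup>2) * exp (- v\<^sup>2) / pi" unfolding W_def by (rule W_sq)
  have "quad_density (Phi_state s p) \<theta> \<phi> u v
     = (sqrt p * W)\<^sup>2 + (s * sqrt (1 - p) * (2 * u * v * W))\<^sup>2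
       + 2 * (sqrt p * W) * (s * sqrt (1 - p) * (2 * u * v * W)) * cos (0 - (- \<theta> - \<phi>))"
    unfolding quad_density_def Phi_amp fock_prods W_def[symmetric] by (rule cmod_cis2)
  also have "\<dots> = W\<^sup>2 * (PE p 0 0 (4 * (1 - p)) u v + (4 * s * sqrt p * sqrt (1 - p) * cos (\<theta> + \<phi>)) * u * v)"
  proof -
    have s1: "s * s = 1" using s by (simp add: power2_eq_square)
    have p1: "sqrt p * sqrt p = p" "sqrt (1 - p) * sqrt (1 - p) = 1 - p" using p by simp_all
    have c: "cos (0 - (- \<theta> - \<phi>)) = cos (\<theta> + \<phi>)" by (rule arg_cong[where f=cos]) simp
    show ?thesis using s1 p1 unfolding PE_def power2_eq_square c by algebra
  qed
  finally show "quad_density (Phi_state s p) \<theta> \<phi> u v = exp (- u\<^sup>2) * exp (- v\<^sup>2) / pi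
       * (PE p 0 0 (4 * (1 - p)) u v + (4 * s * sqrt p * sqrt (1 - p) * cos (\<theta> + \<phi>)) * u * v)"
    by (simp add: W2)
qed

lemma Psi_dens:
  assumes s: "s\<^sup>2 = 1" and p: "0 \<le> p" "p \<le> 1"
  shows "quad_density (Psi_state s p) \<theta> \<phi> = (\<lambda>u v. exp (- u\<^sup>2) * exp (- v\<^sup>2) / pi
       * (PE 0 (2 * (1 - p)) (2 * p) 0 u v + (4 * s * sqrt p * sqrt (1 - p) * cos (\<theta> - \<phi>)) * u * v))"
proof (intro ext)
  fix u v
  define W where "W = exp (- u\<^sup>2 / 2) * exp (- v\<^sup>2 / 2) / sqrt pi"
  have W2: "W\<^sup>2 = exp (- u\<^sup>2) * exp (- v\<^sup>2) / pi" unfolding W_def by (rule W_sq)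
  have c: "cos (- \<phi> - - \<theta>) = cos (\<theta> - \<phi>)" by (rule arg_cong[where f=cos]) simp
  have "quad_density (Psi_state s p) \<theta> \<phi> u v
     = (sqrt p * (sqrt 2 * v * W))\<^sup>2 + (s * sqrt (1 - p) * (sqrt 2 * u * W))\<^sup>2
       + 2 * (sqrt p * (sqrt 2 * v * W)) * (s * sqrt (1 - p) * (sqrt 2 * u * W)) * cos (- \<phi> - (- \<theta>))"
    unfolding quad_density_def Psi_amp fock_prods W_def[symmetric] by (rule cmod_cis2)
  also have "\<dots> = W\<^sup>2 * (PE 0 (2 * (1 - p)) (2 * p) 0 u v + (4 * s * sqrt p * sqrt (1 - p) * cos (\<theta> - \<phi>)) * u * v)"
  proof -
    have s1: "s * s = 1" using s by (simp add: power2_eq_square)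
    have p1: "sqrt p * sqrt p = p" "sqrt (1 - p) * sqrt (1 - p) = 1 - p" "sqrt 2 * sqrt 2 = (2::real)" using p by simp_all
    show ?thesis using s1 p1 unfolding PE_def power2_eq_square c by algebra
  qed
  finally show "quad_density (Psi_state s p) \<theta> \<phi> u v = exp (- u\<^sup>2) * exp (- v\<^sup>2) / pi
       * (PE 0 (2 * (1 - p)) (2 * p) 0 u v + (4 * s * sqrt p * sqrt (1 - p) * cos (\<theta> - \<phi>)) * u * v)"
    by (simp add: W2)
qed

lemma K_eq: assumes "s\<^sup>2 = 1" "0 \<le> p" "p \<le> 1"
  shows "\<bar>4 * s * sqrt p * sqrt (1 - p)\<bar> / pi = 4 / pi * sqrt (p * (1 - p))"
proof -
  have "\<bar>s\<bar> = 1" using assms(1) by (auto simp: power2_eq_1_iff)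
  then show ?thesis using assms by (simp add: abs_mult real_sqrt_mult)
qed

theorem mainTheorem5:
  fixes p :: real and c :: "nat \<Rightarrow> nat \<Rightarrow> complex"
  assumes "0 \<le> p" and "p \<le> 1"
    and "c \<in> {Phi_state 1 p, Phi_state (-1) p, Psi_state 1 p, Psi_state (-1) p}"
  shows "Qcorr c = 4 / pi * sqrt (p * (1 - p)) \<and> \<bar>E00 c\<bar> = 4 / pi * sqrt (p * (1 - p))"
proof -
  have Phi: "Qcorr (Phi_state s p) = 4 / pi * sqrt (p * (1 - p)) \<and> \<bar>E00 (Phi_state s p)\<bar> = 4 / pi * sqrt (p * (1 - p))"
    if s: "s\<^sup>2 = 1" for s :: real
  proof -
    have "Qcorr (Phi_state s p) = \<bar>4 * s * sqrt p * sqrt (1 - p)\<bar> / pi \<and> \<bar>E00 (Phi_state s p)\<bar> = \<bar>4 * s * sqrt p * sqrt (1 - p)\<bar> / pi"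
      by (rule final[where c="Phi_state s p" and a=p and b=0 and g=0 and d="4 * (1 - p)" and K="4 * s * sqrt p * sqrt (1 - p)" and w="\<lambda>\<theta> \<phi>. \<theta> + \<phi>"])
         (rule Phi_dens[OF s assms(1,2)], simp)
    then show ?thesis unfolding K_eq[OF s assms(1,2)] .
  qed
  have Psi: "Qcorr (Psi_state s p) = 4 / pi * sqrt (p * (1 - p)) \<and> \<bar>E00 (Psi_state s p)\<bar> = 4 / pi * sqrt (p * (1 - p))"
    if s: "s\<^sup>2 = 1" for s :: real
  proof -
    have "Qcorr (Psi_state s p) = \<bar>4 * s * sqrt p * sqrt (1 - p)\<bar> / pi \<and> \<bar>E00 (Psi_state s p)\<bar> = \<bar>4 * s * sqrt p * sqrt (1 - p)\<bar> / pi"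
      by (rule final[where c="Psi_state s p" and a=0 and b="2 * (1 - p)" and g="2 * p" and d=0 and K="4 * s * sqrt p * sqrt (1 - p)" and w="\<lambda>\<theta> \<phi>. \<theta> - \<phi>"])
         (rule Psi_dens[OF s assms(1,2)], simp)
    then show ?thesis unfolding K_eq[OF s assms(1,2)] .
  qed
  show ?thesis using assms(3) Phi[of 1] Phi[of "-1"] Psi[of 1] Psi[of "-1"] by auto
qed

end
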